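(* Let $(X,d_X)$ be a discrete countable metric space and $A\subset X$ nonempty. Let $X_0,X_1$ be two copies of $X$ (the copy of $x\in X$ in $X_i$ denoted $x_i$), and define the metric $d^A$ on $X_0\sqcup X_1$ by $d^A(x_i,y_i)=d_X(x,y)$ for $i=0,1$ and $d^A(x_0,y_1)=\inf_{z\in A}[d_X(x,z)+d_X(y,z)+1]$. Identifying $\mathbb B(H_{X_0},H_{X_1})$ with $\mathbb B(H_X)$, the module $M_{X_1,d^A}$ (with $X_0$ playing the role of $X$) coincides with the norm closure in $\mathbb B(H_X)$ of $\bigcup_{k=1}^\infty C^*_u(N_k(A))$, where $N_k(A)=\{x\in X: d_X(x,A)\le k\}$ carries the restricted metric and each $T\in C^*_u(N_k(A))\subset\mathbb B(H_{N_k(A)})$ is regarded as the operator on $H_X$ equal to $T$ on $H_{N_k(A)}=\ell^2(N_k(A))$ and $0$ on its orthogonal complement.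
   Context: $H_Z=\ell^2(Z)$ with standard basis $\{\delta_z\}$. For a metric space $(Z,d_Z)$, $C^*_u(Z)$ is the norm closure in $\mathbb B(H_Z)$ of bounded operators of finite propagation ($T$ has propagation at most $L$ if $d_Z(z,z')\ge L$ implies $(\delta_z,T\delta_{z'})=0$). For a metric $d$ on $X\sqcup Y$ extending $d_X$, $M_{Y,d}$ is the norm closure in $\mathbb B(H_X,H_Y)$ of the bounded operators $T:H_X\to H_Y$ of finite propagation (i.e. there is $L$ with $(\delta_y,T\delta_x)=0$ whenever $d(x,y)\ge L$). *)

theory Defs
  imports "HOL-Analysis.Analysis"
begin

text \<open>Vectors of l2(Z), for Z a subset of the ambient type, are represented as
  complex-valued functions on the whole type vanishing outside Z.\<close>

definition ell2_on :: "'a set \<Rightarrow> ('a \<Rightarrow> complex) set" where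
  "ell2_on Z = {f. (\<forall>x. x \<notin> Z \<longrightarrow> f x = 0) \<and> (\<lambda>x. (cmod (f x))^2) summable_on UNIV}"

definition ell2_norm :: "('a \<Rightarrow> complex) \<Rightarrow> real" where
  "ell2_norm f = sqrt (infsum (\<lambda>x. (cmod (f x))^2) UNIV)"

text \<open>Bounded (complex linear) operators from l2(Z) to l2(W); only the values on l2(Z) matter.\<close>

definition bounded_op :: "'a set \<Rightarrow> 'b set \<Rightarrow> (('a \<Rightarrow> complex) \<Rightarrow> ('b \<Rightarrow> complex)) \<Rightarrow> bool" where
  "bounded_op Z W T \<longleftrightarrow>
     (\<forall>f\<in>ell2_on Z. T f \<in> ell2_on W) \<and>
     (\<forall>f\<in>ell2_on Z. \<forall>g\<in>ell2_on Z. T (\<lambda>x. f x + g x) = (\<lambda>y. T f y + T g y)) \<and>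
     (\<forall>c. \<forall>f\<in>ell2_on Z. T (\<lambda>x. c * f x) = (\<lambda>y. c * T f y)) \<and>
     (\<exists>C. \<forall>f\<in>ell2_on Z. ell2_norm (T f) \<le> C * ell2_norm f)"

definition norm_closure ::
  "'a set \<Rightarrow> 'b set \<Rightarrow> (('a \<Rightarrow> complex) \<Rightarrow> ('b \<Rightarrow> complex)) set \<Rightarrow> (('a \<Rightarrow> complex) \<Rightarrow> ('b \<Rightarrow> complex)) set" where
  "norm_closure Z W S = {T. bounded_op Z W T \<and>
     (\<forall>\<epsilon>>0. \<exists>S\<in>S. \<forall>f\<in>ell2_on Z. ell2_norm (\<lambda>y. T f y - S f y) \<le> \<epsilon> * ell2_norm f)}"

definition delta :: "'a \<Rightarrow> 'a \<Rightarrow> complex" where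
  "delta z = (\<lambda>x. if x = z then 1 else 0)"

text \<open>Matrix coefficient (delta z, T delta z') is (T (delta z')) z.\<close>

definition finite_prop_on :: "'a::metric_space set \<Rightarrow> (('a \<Rightarrow> complex) \<Rightarrow> ('a \<Rightarrow> complex)) \<Rightarrow> bool" where
  "finite_prop_on Z T \<longleftrightarrow> (\<exists>L. \<forall>z\<in>Z. \<forall>z'\<in>Z. L \<le> dist z z' \<longrightarrow> T (delta z') z = 0)"

definition uniform_roe :: "'a::metric_space set \<Rightarrow> (('a \<Rightarrow> complex) \<Rightarrow> ('a \<Rightarrow> complex)) set" where
  "uniform_roe Z = norm_closure Z Z {T. bounded_op Z Z T \<and> finite_prop_on Z T}"

text \<open>The metric d^A on X_0 + X_1, with Inl x = x_0 and Inr x = x_1.\<close>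

definition dA :: "'a::metric_space set \<Rightarrow> 'a + 'a \<Rightarrow> 'a + 'a \<Rightarrow> real" where
  "dA A p q = (case (p, q) of
       (Inl x, Inl y) \<Rightarrow> dist x y
     | (Inr x, Inr y) \<Rightarrow> dist x y
     | (Inl x, Inr y) \<Rightarrow> Inf ((\<lambda>z. dist x z + dist y z + 1) ` A)
     | (Inr y, Inl x) \<Rightarrow> Inf ((\<lambda>z. dist x z + dist y z + 1) ` A))"

text \<open>The module M_{X_1, d^A}, with B(H_{X_0}, H_{X_1}) identified with B(H_X):
  an operator T on l2(X) has coefficient (delta y_1, T delta x_0) = (T (delta x)) y.\<close>

definition M_module :: "'a::metric_space set \<Rightarrow> (('a \<Rightarrow> complex) \<Rightarrow> ('a \<Rightarrow> complex)) set" where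
  "M_module A = norm_closure UNIV UNIV
     {T. bounded_op UNIV UNIV T \<and>
         (\<exists>L. \<forall>x y. L \<le> dA A (Inl x) (Inr y) \<longrightarrow> T (delta x) y = 0)}"

definition nbhd :: "nat \<Rightarrow> 'a::metric_space set \<Rightarrow> 'a set" where
  "nbhd k A = {x. infdist x A \<le> real k}"

definition extend_by_zero :: "'a set \<Rightarrow> (('a \<Rightarrow> complex) \<Rightarrow> ('a \<Rightarrow> complex)) \<Rightarrow> (('a \<Rightarrow> complex) \<Rightarrow> ('a \<Rightarrow> complex))" where
  "extend_by_zero Z T = (\<lambda>f. T (\<lambda>x. if x \<in> Z then f x else 0))"

end

theory Submission imports Defs begin

lemma ell2_UNIV: "f \<in> ell2_on UNIV \<longleftrightarrow> (\<lambda>x. (cmod (f x))^2) summable_on UNIV"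
  by (simp add: ell2_on_def)

lemma ell2_on_UNIV: "f \<in> ell2_on Z \<Longrightarrow> f \<in> ell2_on UNIV"
  by (simp add: ell2_on_def)

lemma ell2_norm_nonneg: "ell2_norm f \<ge> 0"
  unfolding ell2_norm_def by (simp add: infsum_nonneg)

lemma ell2_norm_zero[simp]: "ell2_norm (\<lambda>_. 0) = 0"
  by (simp add: ell2_norm_def)

lemma ell2_comparison:
  assumes "f \<in> ell2_on UNIV" "\<And>x. cmod (g x) \<le> cmod (f x)"
  shows "g \<in> ell2_on UNIV" "ell2_norm g \<le> ell2_norm f"
proof -
  have le: "\<And>x. (cmod (g x))^2 \<le> (cmod (f x))^2" using assms(2) by (simp add: power_mono)
  have s: "(\<lambda>x. (cmod (g x))^2) summable_on UNIV"
    by (rule summable_on_comparison_test[OF _ le]) (use assms in \<open>auto simp: ell2_on_def\<close>)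
  then show "g \<in> ell2_on UNIV" by (simp add: ell2_on_def)
  show "ell2_norm g \<le> ell2_norm f" unfolding ell2_norm_def
    by (intro real_sqrt_le_mono infsum_mono s le) (use assms in \<open>auto simp: ell2_on_def\<close>)
qed

lemma ell2_restr:
  assumes "f \<in> ell2_on UNIV"
  shows "(\<lambda>x. if x \<in> Z then f x else 0) \<in> ell2_on Z"
    "ell2_norm (\<lambda>x. if x \<in> Z then f x else 0) \<le> ell2_norm f"
proof -
  have "(\<lambda>x. if x \<in> Z then f x else 0) \<in> ell2_on UNIV"
    by (rule ell2_comparison(1)[OF assms]) auto
  then show "(\<lambda>x. if x \<in> Z then f x else 0) \<in> ell2_on Z" by (auto simp: ell2_on_def)
  show "ell2_norm (\<lambda>x. if x \<in> Z then f x else 0) \<le> ell2_norm f"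
    by (rule ell2_comparison(2)[OF assms]) auto
qed

lemma ell2_sum_bound:
  assumes "f \<in> ell2_on UNIV" "g \<in> ell2_on UNIV" "\<And>x. cmod (h x) \<le> cmod (f x) + cmod (g x)"
  shows "h \<in> ell2_on UNIV"
proof -
  have le: "(cmod (h x))^2 \<le> 2 * (cmod (f x))^2 + 2 * (cmod (g x))^2" for x
  proof -
    have "(cmod (h x))^2 \<le> (cmod (f x) + cmod (g x))^2"
      using assms(3)[of x] by (simp add: power_mono)
    also have "\<dots> \<le> 2 * (cmod (f x))^2 + 2 * (cmod (g x))^2"
      by (smt (verit) power2_sum sum_squares_bound)
    finally show ?thesis .
  qed
  have "(\<lambda>x. 2 * (cmod (f x))^2 + 2 * (cmod (g x))^2) summable_on UNIV"
    using assms(1,2) by (intro summable_on_add summable_on_cmult_right) (auto simp: ell2_on_def)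
  then have "(\<lambda>x. (cmod (h x))^2) summable_on UNIV"
    by (rule summable_on_comparison_test[OF _ le]) auto
  then show ?thesis by (simp add: ell2_on_def)
qed

lemma ell2_add: "f \<in> ell2_on Z \<Longrightarrow> g \<in> ell2_on Z \<Longrightarrow> (\<lambda>x. f x + g x) \<in> ell2_on Z"
  using ell2_sum_bound[of f g "\<lambda>x. f x + g x"] norm_triangle_ineq
  by (auto simp: ell2_on_def)

lemma ell2_diff: "f \<in> ell2_on Z \<Longrightarrow> g \<in> ell2_on Z \<Longrightarrow> (\<lambda>x. f x - g x) \<in> ell2_on Z"
  using ell2_sum_bound[of f g "\<lambda>x. f x - g x"] norm_triangle_ineq4
  by (auto simp: ell2_on_def)

lemma ell2_scale: "f \<in> ell2_on Z \<Longrightarrow> (\<lambda>x. c * f x) \<in> ell2_on Z"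
proof -
  assume f: "f \<in> ell2_on Z"
  have "(\<lambda>x. (cmod c)^2 * (cmod (f x))^2) summable_on UNIV"
    using f by (intro summable_on_cmult_right) (auto simp: ell2_on_def)
  then show ?thesis using f by (auto simp: ell2_on_def norm_mult power_mult_distrib)
qed

lemma delta_ell2: "delta a \<in> ell2_on {a}"
proof -
  have "(\<lambda>x. (cmod (delta a x))^2) summable_on UNIV \<longleftrightarrow> (\<lambda>x. (cmod (delta a x))^2) summable_on {a}"
    by (rule summable_on_cong_neutral) (auto simp: delta_def)
  then show ?thesis by (auto simp: ell2_on_def delta_def)
qed

lemma ell2_mono_set: "f \<in> ell2_on Z \<Longrightarrow> Z \<subseteq> W \<Longrightarrow> f \<in> ell2_on W"
  by (auto simp: ell2_on_def)

lemma ell2_point: assumes "f \<in> ell2_on UNIV" shows "cmod (f y) \<le> ell2_norm f"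
proof -
  have "(cmod (f y))^2 \<le> infsum (\<lambda>x. (cmod (f x))^2) UNIV"
    using finite_sum_le_infsum[of "\<lambda>x. (cmod (f x))^2" UNIV "{y}"] assms by (auto simp: ell2_on_def)
  then have "sqrt ((cmod (f y))^2) \<le> ell2_norm f" unfolding ell2_norm_def
    by (rule real_sqrt_le_mono)
  then show ?thesis by simp
qed

lemma L2_le_ell2: assumes "f \<in> ell2_on UNIV" "finite F"
  shows "L2_set (\<lambda>x. cmod (f x)) F \<le> ell2_norm f"
  unfolding L2_set_def ell2_norm_def
  by (intro real_sqrt_le_mono finite_sum_le_infsum) (use assms in \<open>auto simp: ell2_on_def\<close>)

lemma ell2_triangle:
  assumes "f \<in> ell2_on UNIV" "g \<in> ell2_on UNIV" "\<And>x. h x = f x + g x"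
  shows "ell2_norm h \<le> ell2_norm f + ell2_norm g"
proof -
  have hs: "h \<in> ell2_on UNIV" using ell2_sum_bound[OF assms(1,2)] assms(3) norm_triangle_ineq by metis
  have "infsum (\<lambda>x. (cmod (h x))^2) UNIV \<le> (ell2_norm f + ell2_norm g)^2"
  proof (rule infsum_le_finite_sums)
    show "(\<lambda>x. (cmod (h x))^2) summable_on UNIV" using hs by (simp add: ell2_on_def)
    fix F :: "'a set" assume F: "finite F" "F \<subseteq> UNIV"
    have e: "sum (\<lambda>x. (cmod (h x))^2) F = (L2_set (\<lambda>x. cmod (h x)) F)^2"
      unfolding L2_set_def by (simp add: sum_nonneg)
    have "L2_set (\<lambda>x. cmod (h x)) F \<le> L2_set (\<lambda>x. cmod (f x) + cmod (g x)) F"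
      by (rule L2_set_mono) (auto simp: assms(3) norm_triangle_ineq)
    also have "\<dots> \<le> L2_set (\<lambda>x. cmod (f x)) F + L2_set (\<lambda>x. cmod (g x)) F"
      by (rule L2_set_triangle_ineq)
    also have "\<dots> \<le> ell2_norm f + ell2_norm g"
      using L2_le_ell2[OF assms(1) F(1)] L2_le_ell2[OF assms(2) F(1)] by simp
    finally have "L2_set (\<lambda>x. cmod (h x)) F \<le> ell2_norm f + ell2_norm g" .
    then show "sum (\<lambda>x. (cmod (h x))^2) F \<le> (ell2_norm f + ell2_norm g)^2"
      unfolding e by (simp add: power_mono L2_set_nonneg)
  qed
  then have "ell2_norm h \<le> sqrt ((ell2_norm f + ell2_norm g)^2)"
    unfolding ell2_norm_def by (rule real_sqrt_le_mono)
  also have "\<dots> = ell2_norm f + ell2_norm g" using ell2_norm_nonneg[of f] ell2_norm_nonneg[of g] by simp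
  finally show ?thesis .
qed


lemma ell2_tail:
  assumes "f \<in> ell2_on UNIV" "\<epsilon> > 0"
  shows "\<exists>F. finite F \<and> ell2_norm (\<lambda>x. if x \<in> F then 0 else f x) \<le> \<epsilon>"
proof -
  define g where "g = (\<lambda>x. (cmod (f x))^2)"
  define S where "S = infsum g UNIV"
  have gs: "g summable_on UNIV" using assms by (simp add: g_def ell2_on_def)
  have "(g has_sum S) UNIV" using gs by (simp add: S_def)
  then have "(sum g \<longlongrightarrow> S) (finite_subsets_at_top UNIV)" by (simp add: has_sum_def)
  then have "eventually (\<lambda>F. dist (sum g F) S < \<epsilon>^2) (finite_subsets_at_top UNIV)"
    using assms(2) by (simp add: tendsto_iff)
  then obtain X where X: "finite X" "dist (sum g X) S < \<epsilon>^2"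
    unfolding eventually_finite_subsets_at_top by blast
  have tl: "(\<lambda>x. if x \<in> X then 0 else f x) \<in> ell2_on UNIV"
    by (rule ell2_comparison(1)[OF assms(1)]) auto
  have "infsum (\<lambda>x. (cmod (if x \<in> X then 0 else f x))^2) UNIV \<le> \<epsilon>^2"
  proof (rule infsum_le_finite_sums)
    show "(\<lambda>x. (cmod (if x \<in> X then 0 else f x))^2) summable_on UNIV" using tl by (simp add: ell2_on_def)
    fix G :: "'a set" assume G: "finite G" "G \<subseteq> UNIV"
    have "sum (\<lambda>x. (cmod (if x \<in> X then 0 else f x))^2) G = sum g (G - X)"
      by (rule sum.mono_neutral_cong_right) (use G in \<open>auto simp: g_def\<close>)
    also have "sum g (G - X) = sum g (G \<union> X) - sum g X"
      using G X by (metis Un_Diff_cancel2 add_diff_cancel_right' finite_Diff sum.union_disjoint Diff_disjoint inf_commute)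
    also have "sum g (G \<union> X) \<le> S" unfolding S_def
      by (rule finite_sum_le_infsum) (use gs G X in \<open>auto simp: g_def\<close>)
    finally show "sum (\<lambda>x. (cmod (if x \<in> X then 0 else f x))^2) G \<le> \<epsilon>^2"
      using X(2) by (simp add: dist_real_def)
  qed
  then have "ell2_norm (\<lambda>x. if x \<in> X then 0 else f x) \<le> sqrt (\<epsilon>^2)"
    unfolding ell2_norm_def by (rule real_sqrt_le_mono)
  then show ?thesis using X(1) assms(2) by auto
qed

lemma bop_add: "bounded_op Z W S \<Longrightarrow> f \<in> ell2_on Z \<Longrightarrow> g \<in> ell2_on Z \<Longrightarrow> S (\<lambda>x. f x + g x) y = S f y + S g y"
proof -
  assume a: "bounded_op Z W S" "f \<in> ell2_on Z" "g \<in> ell2_on Z"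
  then have "S (\<lambda>x. f x + g x) = (\<lambda>y. S f y + S g y)" unfolding bounded_op_def by blast
  then show ?thesis by simp
qed

lemma bop_scale: "bounded_op Z W S \<Longrightarrow> f \<in> ell2_on Z \<Longrightarrow> S (\<lambda>x. c * f x) y = c * S f y"
proof -
  assume a: "bounded_op Z W S" "f \<in> ell2_on Z"
  then have "S (\<lambda>x. c * f x) = (\<lambda>y. c * S f y)" unfolding bounded_op_def by blast
  then show ?thesis by simp
qed

lemma bop_zero: "bounded_op Z W S \<Longrightarrow> S (\<lambda>_. 0) = (\<lambda>_. 0)"
proof
  fix y assume S: "bounded_op Z W S"
  have z: "(\<lambda>_. 0) \<in> ell2_on Z" by (simp add: ell2_on_def)
  show "S (\<lambda>_. 0) y = 0" using bop_scale[OF S z, of 0 y] by simp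
qed

lemma bop_in: "bounded_op Z W S \<Longrightarrow> f \<in> ell2_on Z \<Longrightarrow> S f \<in> ell2_on W"
  unfolding bounded_op_def by blast

lemma bop_bound: "bounded_op Z W S \<Longrightarrow> \<exists>C\<ge>0. \<forall>f\<in>ell2_on Z. ell2_norm (S f) \<le> C * ell2_norm f"
proof -
  assume "bounded_op Z W S"
  then obtain C where C: "\<forall>f\<in>ell2_on Z. ell2_norm (S f) \<le> C * ell2_norm f"
    unfolding bounded_op_def by blast
  have "\<forall>f\<in>ell2_on Z. ell2_norm (S f) \<le> \<bar>C\<bar> * ell2_norm f"
  proof
    fix f assume "f \<in> ell2_on Z"
    then have "ell2_norm (S f) \<le> C * ell2_norm f" using C by blast
    also have "\<dots> \<le> \<bar>C\<bar> * ell2_norm f" by (rule mult_right_mono) (auto simp: ell2_norm_nonneg)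
    finally show "ell2_norm (S f) \<le> \<bar>C\<bar> * ell2_norm f" .
  qed
  then show ?thesis by (intro exI[of _ "\<bar>C\<bar>"]) auto
qed

lemma bop_finite:
  assumes S: "bounded_op UNIV UNIV S" and F: "finite F" and h: "h \<in> ell2_on UNIV"
  shows "S (\<lambda>x. if x \<in> F then h x else 0) y = (\<Sum>x\<in>F. h x * S (delta x) y)"
  using F
proof (induction F)
  case empty
  then show ?case using bop_zero[OF S] by simp
next
  case (insert a F)
  have eq: "(\<lambda>x. if x \<in> insert a F then h x else 0) =
     (\<lambda>x. (\<lambda>x. h a * delta a x) x + (\<lambda>x. if x \<in> F then h x else 0) x)"
    using insert by (auto simp: delta_def)
  have d: "delta a \<in> ell2_on UNIV" using delta_ell2 by (rule ell2_on_UNIV)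
  have "S (\<lambda>x. if x \<in> insert a F then h x else 0) y
      = S (\<lambda>x. h a * delta a x) y + S (\<lambda>x. if x \<in> F then h x else 0) y"
    unfolding eq by (rule bop_add[OF S], rule ell2_scale[OF d], rule ell2_comparison(1)[OF h], auto)
  also have "S (\<lambda>x. h a * delta a x) y = h a * S (delta a) y" by (rule bop_scale[OF S d])
  finally show ?case using insert by simp
qed

lemma coef_lemma:
  assumes S: "bounded_op UNIV UNIV S" and h: "h \<in> ell2_on UNIV"
    and z: "\<And>x. h x \<noteq> 0 \<Longrightarrow> S (delta x) y = 0"
  shows "S h y = 0"
proof -
  obtain C where C: "C \<ge> 0" "\<forall>f\<in>ell2_on UNIV. ell2_norm (S f) \<le> C * ell2_norm f"
    using bop_bound[OF S] by blast
  have "cmod (S h y) \<le> 0 + e" if e: "e > 0" for e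
  proof -
    obtain F where F: "finite F" "ell2_norm (\<lambda>x. if x \<in> F then 0 else h x) \<le> e / (C + 1)"
      using ell2_tail[OF h, of "e / (C+1)"] e C by auto
    have t: "(\<lambda>x. if x \<in> F then 0 else h x) \<in> ell2_on UNIV"
      by (rule ell2_comparison(1)[OF h]) auto
    have r: "(\<lambda>x. if x \<in> F then h x else 0) \<in> ell2_on UNIV"
      by (rule ell2_comparison(1)[OF h]) auto
    have eq: "h = (\<lambda>x. (\<lambda>x. if x \<in> F then h x else 0) x + (\<lambda>x. if x \<in> F then 0 else h x) x)" by auto
    have "S h y = S (\<lambda>x. (\<lambda>x. if x \<in> F then h x else 0) x + (\<lambda>x. if x \<in> F then 0 else h x) x) y"
      using eq by (rule arg_cong[where f="\<lambda>h. S h y"])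
    then have "S h y = S (\<lambda>x. if x \<in> F then h x else 0) y + S (\<lambda>x. if x \<in> F then 0 else h x) y"
      using bop_add[OF S r t] by simp
    also have "S (\<lambda>x. if x \<in> F then h x else 0) y = 0"
    proof -
      have "\<forall>x\<in>F. h x * S (delta x) y = 0"
      proof
        fix x assume "x \<in> F"
        show "h x * S (delta x) y = 0" using z[of x] by (cases "h x = 0") auto
      qed
      then have "(\<Sum>x\<in>F. h x * S (delta x) y) = 0" by (intro sum.neutral) blast
      then show ?thesis using bop_finite[OF S F(1) h] by simp
    qed
    finally have "cmod (S h y) = cmod (S (\<lambda>x. if x \<in> F then 0 else h x) y)" by simp
    also have "\<dots> \<le> ell2_norm (S (\<lambda>x. if x \<in> F then 0 else h x))"
      by (rule ell2_point) (rule bop_in[OF S t])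
    also have "\<dots> \<le> C * ell2_norm (\<lambda>x. if x \<in> F then 0 else h x)" using C t by blast
    also have "\<dots> \<le> C * (e / (C + 1))" using F(2) C(1) by (rule mult_left_mono)
    also have "\<dots> \<le> e" using C e by (simp add: field_simps)
    finally show ?thesis by simp
  qed
  then have "cmod (S h y) \<le> 0" by (rule field_le_epsilon)
  then show ?thesis by simp
qed


lemma dA_eq: "dA A (Inl x) (Inr y) = (INF z\<in>A. dist x z + dist y z + 1)"
  by (simp add: dA_def)

lemma dA_lower: assumes "A \<noteq> {}" "\<And>z. z \<in> A \<Longrightarrow> m \<le> dist x z + dist y z + 1"
  shows "m \<le> dA A (Inl x) (Inr y)"
  unfolding dA_eq by (rule cINF_greatest) (use assms in auto)

lemma dA_ge_dist: "A \<noteq> {} \<Longrightarrow> dist x y + 1 \<le> dA A (Inl x) (Inr y)"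
  by (rule dA_lower) (auto simp: dist_triangle2)

lemma dA_ge_inf1: "A \<noteq> {} \<Longrightarrow> infdist x A + 1 \<le> dA A (Inl x) (Inr y)"
  by (rule dA_lower) (auto intro: add_increasing2 order_trans[OF infdist_le])

lemma dA_ge_inf2: "A \<noteq> {} \<Longrightarrow> infdist y A + 1 \<le> dA A (Inl x) (Inr y)"
  by (rule dA_lower) (auto intro: add_increasing order_trans[OF infdist_le])

lemma dA_upper: "z \<in> A \<Longrightarrow> dA A (Inl x) (Inr y) \<le> dist x z + dist y z + 1"
  unfolding dA_eq by (rule cINF_lower) (auto intro: bdd_belowI[of _ 0])

lemma near: assumes "A \<noteq> {}" "infdist x A < r" shows "\<exists>z\<in>A. dist x z < r"
proof -
  have "(INF a\<in>A. dist x a) < r" using assms by (simp add: infdist_def)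
  then show ?thesis by (subst (asm) cINF_less_iff) (use assms in \<open>auto intro: bdd_belowI[of _ 0]\<close>)
qed


lemma gen_to_rhs:
  fixes A :: "'a::metric_space set"
  assumes A: "A \<noteq> {}" and S: "bounded_op UNIV UNIV S"
    and L: "\<forall>x y. L \<le> dA A (Inl x) (Inr y) \<longrightarrow> S (delta x) y = 0"
  shows "\<exists>k\<in>{1..}. \<exists>R\<in>uniform_roe (nbhd k A). \<forall>f\<in>ell2_on UNIV. extend_by_zero (nbhd k A) R f = S f"
proof -
  define k where "k = nat \<lceil>L\<rceil> + 1"
  have kL: "L \<le> real k" unfolding k_def by linarith
  define Z where "Z = nbhd k A"
  have col: "S (delta x) y = 0" if "x \<notin> Z" for x y
  proof -
    have "real k < infdist x A" using that by (simp add: Z_def nbhd_def)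
    then have "L \<le> dA A (Inl x) (Inr y)" using dA_ge_inf1[OF A, where x=x and y=y] kL by linarith
    then show ?thesis using L by blast
  qed
  have row: "S (delta x) y = 0" if "y \<notin> Z" for x y
  proof -
    have "real k < infdist y A" using that by (simp add: Z_def nbhd_def)
    then have "L \<le> dA A (Inl x) (Inr y)" using dA_ge_inf2[OF A, where x=x and y=y] kL by linarith
    then show ?thesis using L by blast
  qed
  define R where "R = (\<lambda>g y. if y \<in> Z then S g y else 0)"
  have eq: "extend_by_zero Z R f = S f" if f: "f \<in> ell2_on UNIV" for f
  proof
    fix y
    show "extend_by_zero Z R f y = S f y"
    proof (cases "y \<in> Z")
      case False
      then have "S f y = 0" by (intro coef_lemma[OF S f] row[OF False])
      then show ?thesis using False by (simp add: extend_by_zero_def R_def)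
    next
      case True
      define r where "r = (\<lambda>x. if x \<in> Z then f x else 0)"
      define t where "t = (\<lambda>x. if x \<in> Z then 0 else f x)"
      have r: "r \<in> ell2_on UNIV" unfolding r_def by (rule ell2_comparison(1)[OF f]) auto
      have t: "t \<in> ell2_on UNIV" unfolding t_def by (rule ell2_comparison(1)[OF f]) auto
      have "S f y = S (\<lambda>x. r x + t x) y"
        by (rule arg_cong[where f="\<lambda>h. S h y"]) (auto simp: r_def t_def)
      also have "\<dots> = S r y + S t y" by (rule bop_add[OF S r t])
      also have "S t y = 0" by (rule coef_lemma[OF S t]) (use col in \<open>auto simp: t_def split: if_splits\<close>)
      finally show ?thesis using True by (simp add: extend_by_zero_def R_def r_def)
    qed
  qed
  have Rb: "bounded_op Z Z R"
    unfolding bounded_op_def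
  proof (intro conjI ballI allI)
    fix g assume g: "g \<in> ell2_on Z"
    then have "S g \<in> ell2_on UNIV" using bop_in[OF S] ell2_on_UNIV by blast
    then show "R g \<in> ell2_on Z" unfolding R_def by (rule ell2_restr(1))
  next
    fix g h assume g: "g \<in> ell2_on Z" and h: "h \<in> ell2_on Z"
    show "R (\<lambda>x. g x + h x) = (\<lambda>y. R g y + R h y)" unfolding R_def
      using bop_add[OF S ell2_on_UNIV[OF g] ell2_on_UNIV[OF h]] by auto
  next
    fix c g assume g: "g \<in> ell2_on Z"
    show "R (\<lambda>x. c * g x) = (\<lambda>y. c * R g y)" unfolding R_def
      using bop_scale[OF S ell2_on_UNIV[OF g]] by auto
  next
    obtain C where C: "\<forall>f\<in>ell2_on UNIV. ell2_norm (S f) \<le> C * ell2_norm f" using bop_bound[OF S] by blast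
    show "\<exists>C. \<forall>f\<in>ell2_on Z. ell2_norm (R f) \<le> C * ell2_norm f"
    proof (intro exI ballI)
      fix g assume g: "g \<in> ell2_on Z"
      have "ell2_norm (R g) \<le> ell2_norm (S g)" unfolding R_def
        by (rule ell2_restr(2)) (use bop_in[OF S] ell2_on_UNIV[OF g] in auto)
      also have "\<dots> \<le> C * ell2_norm g" using C ell2_on_UNIV[OF g] by blast
      finally show "ell2_norm (R g) \<le> C * ell2_norm g" .
    qed
  qed
  have Rp: "finite_prop_on Z R"
    unfolding finite_prop_on_def
  proof (intro exI[of _ L] ballI impI)
    fix z z' assume "z \<in> Z" "z' \<in> Z" "L \<le> dist z z'"
    then have "L \<le> dA A (Inl z') (Inr z)" using dA_ge_dist[OF A, of z' z] by (simp add: dist_commute)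
    then show "R (delta z') z = 0" using L by (simp add: R_def)
  qed
  have "R \<in> uniform_roe Z"
    unfolding uniform_roe_def norm_closure_def
    using Rb Rp by (auto intro!: bexI[of _ R] simp: ell2_norm_nonneg)
  then show ?thesis using eq unfolding Z_def by (intro bexI[of _ k]) (auto simp: k_def)
qed


lemma rhs_to_gen:
  fixes A :: "'a::metric_space set"
  assumes A: "A \<noteq> {}" and R: "R \<in> uniform_roe (nbhd k A)" and e: "\<epsilon> > 0"
  shows "\<exists>S\<in>{T. bounded_op UNIV UNIV T \<and> (\<exists>L. \<forall>x y. L \<le> dA A (Inl x) (Inr y) \<longrightarrow> T (delta x) y = 0)}.
     \<forall>f\<in>ell2_on UNIV. ell2_norm (\<lambda>y. extend_by_zero (nbhd k A) R f y - S f y) \<le> \<epsilon> * ell2_norm f"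
proof -
  define Z where "Z = nbhd k A"
  from R obtain S' where S': "bounded_op Z Z S'" "finite_prop_on Z S'"
    and ap: "\<forall>g\<in>ell2_on Z. ell2_norm (\<lambda>y. R g y - S' g y) \<le> \<epsilon> * ell2_norm g"
    using e unfolding uniform_roe_def norm_closure_def Z_def by blast
  from S'(2) obtain L where L: "\<forall>z\<in>Z. \<forall>z'\<in>Z. L \<le> dist z z' \<longrightarrow> S' (delta z') z = 0"
    unfolding finite_prop_on_def by blast
  define S where "S = extend_by_zero Z S'"
  have rz: "(\<lambda>x. if x \<in> Z then f x else 0) \<in> ell2_on Z" if "f \<in> ell2_on UNIV" for f
    using ell2_restr(1)[OF that] .
  have Sb: "bounded_op UNIV UNIV S"
    unfolding bounded_op_def S_def extend_by_zero_def
  proof (intro conjI ballI allI)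
    fix f :: "'a \<Rightarrow> complex" assume f: "f \<in> ell2_on UNIV"
    show "S' (\<lambda>x. if x \<in> Z then f x else 0) \<in> ell2_on UNIV"
      using bop_in[OF S'(1) rz[OF f]] by (rule ell2_on_UNIV)
  next
    fix f g :: "'a \<Rightarrow> complex" assume f: "f \<in> ell2_on UNIV" and g: "g \<in> ell2_on UNIV"
    have eq: "(\<lambda>x. if x \<in> Z then f x + g x else 0) =
       (\<lambda>x. (\<lambda>x. if x \<in> Z then f x else 0) x + (\<lambda>x. if x \<in> Z then g x else 0) x)" by auto
    show "S' (\<lambda>x. if x \<in> Z then f x + g x else 0) =
       (\<lambda>y. S' (\<lambda>x. if x \<in> Z then f x else 0) y + S' (\<lambda>x. if x \<in> Z then g x else 0) y)"
      unfolding eq by (rule ext) (rule bop_add[OF S'(1) rz[OF f] rz[OF g]])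
  next
    fix c and f :: "'a \<Rightarrow> complex" assume f: "f \<in> ell2_on UNIV"
    have eq: "(\<lambda>x. if x \<in> Z then c * f x else 0) = (\<lambda>x. c * (\<lambda>x. if x \<in> Z then f x else 0) x)" by auto
    show "S' (\<lambda>x. if x \<in> Z then c * f x else 0) = (\<lambda>y. c * S' (\<lambda>x. if x \<in> Z then f x else 0) y)"
      unfolding eq by (rule ext) (rule bop_scale[OF S'(1) rz[OF f]])
  next
    obtain C where C: "C \<ge> 0" "\<forall>f\<in>ell2_on Z. ell2_norm (S' f) \<le> C * ell2_norm f"
      using bop_bound[OF S'(1)] by blast
    show "\<exists>C. \<forall>f\<in>ell2_on UNIV. ell2_norm (S' (\<lambda>x. if x \<in> Z then f x else 0)) \<le> C * ell2_norm f"
    proof (intro exI[of _ C] ballI)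
      fix f :: "'a \<Rightarrow> complex" assume f: "f \<in> ell2_on UNIV"
      have "ell2_norm (S' (\<lambda>x. if x \<in> Z then f x else 0)) \<le> C * ell2_norm (\<lambda>x. if x \<in> Z then f x else 0)"
        using C(2) rz[OF f] by blast
      also have "\<dots> \<le> C * ell2_norm f" using ell2_restr(2)[OF f] C(1) by (rule mult_left_mono)
      finally show "ell2_norm (S' (\<lambda>x. if x \<in> Z then f x else 0)) \<le> C * ell2_norm f" .
    qed
  qed
  have Sp: "\<exists>L'. \<forall>x y. L' \<le> dA A (Inl x) (Inr y) \<longrightarrow> S (delta x) y = 0"
  proof (intro exI[of _ "L + 2 * real k + 3"] allI impI)
    fix x y assume d: "L + 2 * real k + 3 \<le> dA A (Inl x) (Inr y)"
    show "S (delta x) y = 0"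
    proof (cases "x \<in> Z")
      case False
      then have "(\<lambda>z. if z \<in> Z then delta x z else 0) = (\<lambda>_. 0)" by (auto simp: delta_def)
      then show ?thesis using bop_zero[OF S'(1)] by (simp add: S_def extend_by_zero_def)
    next
      case True
      then have e1: "(\<lambda>z. if z \<in> Z then delta x z else 0) = delta x" by (auto simp: delta_def)
      have dx: "delta x \<in> ell2_on Z" using ell2_mono_set[OF delta_ell2] True by auto
      have inZ: "S' (delta x) \<in> ell2_on Z" by (rule bop_in[OF S'(1) dx])
      show ?thesis
      proof (cases "y \<in> Z")
        case False then show ?thesis using inZ e1 by (simp add: S_def extend_by_zero_def ell2_on_def)
      next
        case yZ: True
        have "infdist x A < real k + 1" using True by (simp add: Z_def nbhd_def)
        then obtain z where z: "z \<in> A" "dist x z < real k + 1" using near[OF A] by blast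
        have "dA A (Inl x) (Inr y) \<le> dist x z + dist y z + 1" by (rule dA_upper[OF z(1)])
        moreover have "dist y z \<le> dist y x + dist x z" by (rule dist_triangle)
        ultimately have "L < dist y x" using d z(2) by linarith
        then show ?thesis using L True yZ e1 by (simp add: S_def extend_by_zero_def)
      qed
    qed
  qed
  show ?thesis
  proof (intro bexI[of _ S] ballI)
    fix f :: "'a \<Rightarrow> complex" assume f: "f \<in> ell2_on UNIV"
    have "ell2_norm (\<lambda>y. extend_by_zero Z R f y - S f y) \<le> \<epsilon> * ell2_norm (\<lambda>x. if x \<in> Z then f x else 0)"
      using ap rz[OF f] by (simp add: S_def extend_by_zero_def)
    also have "\<dots> \<le> \<epsilon> * ell2_norm f" using ell2_restr(2)[OF f] by (rule mult_left_mono) (use e in auto)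
    finally show "ell2_norm (\<lambda>y. extend_by_zero (nbhd k A) R f y - S f y) \<le> \<epsilon> * ell2_norm f"
      by (simp add: Z_def)
  qed (use Sb Sp in auto)
qed

theorem mainTheorem6:
  fixes A :: "'a::metric_space set"
  assumes "countable (UNIV :: 'a set)"
    and "\<forall>x::'a. open {x}"
    and "A \<noteq> {}"
  shows "M_module A =
    norm_closure UNIV UNIV (\<Union>k\<in>{1..}. extend_by_zero (nbhd k A) ` uniform_roe (nbhd k A))"
proof -
  define G where "G = {T. bounded_op UNIV UNIV T \<and> (\<exists>L. \<forall>x y. L \<le> dA A (Inl x) (Inr y) \<longrightarrow> T (delta x) y = 0)}"
  define U where "U = (\<Union>k\<in>{1..}. extend_by_zero (nbhd k A) ` uniform_roe (nbhd k A))"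
  have M: "M_module A = norm_closure UNIV UNIV G" unfolding M_module_def G_def ..
  have "norm_closure UNIV UNIV G \<subseteq> norm_closure UNIV UNIV U"
  proof
    fix T assume "T \<in> norm_closure UNIV UNIV G"
    then have "bounded_op UNIV UNIV T \<and> (\<forall>\<epsilon>>0. \<exists>S\<in>G. \<forall>f\<in>ell2_on UNIV. ell2_norm (\<lambda>y. T f y - S f y) \<le> \<epsilon> * ell2_norm f)"
      unfolding norm_closure_def by (rule CollectD)
    then have Tb: "bounded_op UNIV UNIV T"
      and Ta: "\<And>\<epsilon>. \<epsilon> > 0 \<Longrightarrow> \<exists>S\<in>G. \<forall>f\<in>ell2_on UNIV. ell2_norm (\<lambda>y. T f y - S f y) \<le> \<epsilon> * ell2_norm f"
      by blast+
    have "\<exists>S\<in>U. \<forall>f\<in>ell2_on UNIV. ell2_norm (\<lambda>y. T f y - S f y) \<le> \<epsilon> * ell2_norm f" if e: "\<epsilon> > 0" for \<epsilon>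
    proof -
      obtain S where S: "S \<in> G" and SA: "\<forall>f\<in>ell2_on UNIV. ell2_norm (\<lambda>y. T f y - S f y) \<le> \<epsilon> * ell2_norm f"
        using Ta[OF e] by blast
      from S obtain L where Sb: "bounded_op UNIV UNIV S" and SL: "\<forall>x y. L \<le> dA A (Inl x) (Inr y) \<longrightarrow> S (delta x) y = 0"
        unfolding G_def by blast
      obtain k R where k: "k \<in> {1..}" "R \<in> uniform_roe (nbhd k A)"
        "\<forall>f\<in>ell2_on UNIV. extend_by_zero (nbhd k A) R f = S f"
        using gen_to_rhs[OF assms(3) Sb SL] by blast
      have inU: "extend_by_zero (nbhd k A) R \<in> U" unfolding U_def using k(1,2) by blast
      have "\<forall>f\<in>ell2_on UNIV. ell2_norm (\<lambda>y. T f y - extend_by_zero (nbhd k A) R f y) \<le> \<epsilon> * ell2_norm f"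
      proof
        fix f :: "'a \<Rightarrow> complex" assume f: "f \<in> ell2_on UNIV"
        have "extend_by_zero (nbhd k A) R f = S f" using k(3) f by blast
        then show "ell2_norm (\<lambda>y. T f y - extend_by_zero (nbhd k A) R f y) \<le> \<epsilon> * ell2_norm f"
          using SA f by simp
      qed
      then show ?thesis using inU by blast
    qed
    then show "T \<in> norm_closure UNIV UNIV U" unfolding norm_closure_def using Tb by blast
  qed
  moreover have "norm_closure UNIV UNIV U \<subseteq> norm_closure UNIV UNIV G"
  proof
    fix T assume "T \<in> norm_closure UNIV UNIV U"
    then have "bounded_op UNIV UNIV T \<and> (\<forall>\<epsilon>>0. \<exists>S\<in>U. \<forall>f\<in>ell2_on UNIV. ell2_norm (\<lambda>y. T f y - S f y) \<le> \<epsilon> * ell2_norm f)"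
      unfolding norm_closure_def by (rule CollectD)
    then have Tb: "bounded_op UNIV UNIV T"
      and Ta: "\<And>\<epsilon>. \<epsilon> > 0 \<Longrightarrow> \<exists>S\<in>U. \<forall>f\<in>ell2_on UNIV. ell2_norm (\<lambda>y. T f y - S f y) \<le> \<epsilon> * ell2_norm f"
      by blast+
    have "\<exists>S\<in>G. \<forall>f\<in>ell2_on UNIV. ell2_norm (\<lambda>y. T f y - S f y) \<le> \<epsilon> * ell2_norm f" if e: "\<epsilon> > 0" for \<epsilon>
    proof -
      have e2: "\<epsilon> / 2 > 0" using e by simp
      obtain R0 where R0: "R0 \<in> U"
        and a1: "\<forall>f\<in>ell2_on UNIV. ell2_norm (\<lambda>y. T f y - R0 f y) \<le> \<epsilon> / 2 * ell2_norm f"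
        using Ta[OF e2] by blast
      from R0 obtain k R where k: "R \<in> uniform_roe (nbhd k A)" "R0 = extend_by_zero (nbhd k A) R"
        unfolding U_def by blast
      obtain S where S: "S \<in> G"
        and a2: "\<forall>f\<in>ell2_on UNIV. ell2_norm (\<lambda>y. extend_by_zero (nbhd k A) R f y - S f y) \<le> \<epsilon> / 2 * ell2_norm f"
        using rhs_to_gen[OF assms(3) k(1) e2] unfolding G_def by blast
      have Sb: "bounded_op UNIV UNIV S" using S unfolding G_def by blast
      have Rb: "bounded_op (nbhd k A) (nbhd k A) R" using k(1) unfolding uniform_roe_def norm_closure_def by blast
      have "\<forall>f\<in>ell2_on UNIV. ell2_norm (\<lambda>y. T f y - S f y) \<le> \<epsilon> * ell2_norm f"
      proof
        fix f :: "'a \<Rightarrow> complex" assume f: "f \<in> ell2_on UNIV"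
        have Tf: "T f \<in> ell2_on UNIV" by (rule bop_in[OF Tb f])
        have Sf: "S f \<in> ell2_on UNIV" by (rule bop_in[OF Sb f])
        have R0f: "R0 f \<in> ell2_on UNIV" unfolding k(2) extend_by_zero_def
          by (rule ell2_on_UNIV, rule bop_in[OF Rb], rule ell2_restr(1)[OF f])
        have "ell2_norm (\<lambda>y. T f y - S f y) \<le> ell2_norm (\<lambda>y. T f y - R0 f y) + ell2_norm (\<lambda>y. R0 f y - S f y)"
          by (rule ell2_triangle[OF ell2_diff[OF Tf R0f] ell2_diff[OF R0f Sf]]) simp
        also have "ell2_norm (\<lambda>y. T f y - R0 f y) \<le> \<epsilon> / 2 * ell2_norm f" using a1 f by blast
        also have "ell2_norm (\<lambda>y. R0 f y - S f y) \<le> \<epsilon> / 2 * ell2_norm f" using a2 f k(2) by blast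
        finally show "ell2_norm (\<lambda>y. T f y - S f y) \<le> \<epsilon> * ell2_norm f" by simp
      qed
      then show ?thesis using S by blast
    qed
    then show "T \<in> norm_closure UNIV UNIV G" unfolding norm_closure_def using Tb by blast
  qed
  ultimately show ?thesis unfolding M U_def by (rule equalityI)
qed

end
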